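(* For every integer $m\ge13$, $\kappa_m\ge 0.5$.
   Context: $s(m)=m(\log m)^2$. For real $y>1$, $x>1$, $w_y(x)=1-\frac yx-\frac{y-1}{\log y}\frac{\log x}{x}$. $\kappa_m=\frac1m\sum_{p\le (m+1)/2,\ p\text{ prime}}\min_{0\le j\le m}\{\lfloor j/p\rfloor+\lfloor (m-j)/p\rfloor\}\frac{\log p}{p-1}w_p(s(m)e^{s(m)})$. *)

theory Defs
  imports Complex_Main "HOL-Computational_Algebra.Primes"
begin

definition s_fun :: "nat \<Rightarrow> real" where
  "s_fun m = real m * (ln (real m))^2"

definition w_fun :: "real \<Rightarrow> real \<Rightarrow> real" where
  "w_fun y x = 1 - y / x - (y - 1) / ln y * (ln x / x)"

definition kappa :: "nat \<Rightarrow> real" where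
  "kappa m = (1 / real m) *
     (\<Sum>p\<in>{p::nat. prime p \<and> real p \<le> (real m + 1) / 2}.
        real_of_int (Min {\<lfloor>real j / real p\<rfloor> + \<lfloor>real (m - j) / real p\<rfloor> | j. j \<le> m})
        * (ln (real p) / (real p - 1))
        * w_fun (real p) (s_fun m * exp (s_fun m)))"

end

theory Submission
  imports Defs "HOL-Analysis.Analysis"
begin

lemma min_bound:
  fixes m p :: nat
  assumes "p \<ge> 1"
  defines "k \<equiv> Min {\<lfloor>real j / real p\<rfloor> + \<lfloor>real (m - j) / real p\<rfloor> | j. j \<le> m}"
  shows "k \<ge> 0" "real_of_int k \<ge> real ((m + 1) div p) - 1"
proof -
  let ?F = "\<lambda>j. \<lfloor>real j / real p\<rfloor> + \<lfloor>real (m - j) / real p\<rfloor>"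
  have A: "{?F j | j. j \<le> m} = ?F ` {..m}" by blast
  have "k \<in> ?F ` {..m}" unfolding k_def A by (rule Min_in) auto
  then obtain j where j: "j \<le> m" "k = ?F j" by auto
  have kk: "k = int (j div p + (m - j) div p)"
    using j(2) by (simp add: floor_divide_of_nat_eq)
  then show "k \<ge> 0" by simp
  have e1: "j = p * (j div p) + j mod p" and e2: "m - j = p * ((m - j) div p) + (m - j) mod p" by simp_all
  have r1: "j mod p < p" and r2: "(m - j) mod p < p" using assms by simp_all
  have d: "p * (j div p + (m - j) div p + 2) = p * (j div p) + p * ((m - j) div p) + 2 * p"
    by (simp add: algebra_simps)
  have "m + 1 < p * (j div p + (m - j) div p + 2)"
    unfolding d using j(1) e1 e2 r1 r2 by linarith
  hence "(m + 1) div p < j div p + (m - j) div p + 2"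
    by (simp add: less_mult_imp_div_less mult.commute)
  then show "real_of_int k \<ge> real ((m + 1) div p) - 1" using kk by simp
qed

lemma div_bound:
  fixes m p :: nat
  assumes "p \<ge> 1"
  shows "real p * real ((m + 1) div p) \<ge> real m + 2 - real p"
proof -
  have "m + 1 = p * ((m + 1) div p) + (m + 1) mod p" by simp
  moreover have "(m + 1) mod p < p" using assms by simp
  ultimately have "m + 2 \<le> p * ((m + 1) div p) + p" by linarith
  hence "real (m + 2) \<le> real (p * ((m + 1) div p) + p)" by linarith
  then show ?thesis by simp
qed

lemma neg_ln_partial:
  fixes y :: real
  assumes "0 \<le> y" "y < 1"
  shows "(\<Sum>n<N. y^n / real n) \<le> - ln (1 - y)"
proof -
  have "(\<lambda>n. - ((-(-y))^n) / of_nat n) sums ln (1 + -y)"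
    using ln_series'[of "-y"] assms by simp
  hence "(\<lambda>n. - (- ((-(-y))^n) / of_nat n)) sums (- ln (1 + -y))"
    by (rule sums_minus)
  hence s: "(\<lambda>n. y^n / real n) sums (- ln (1 - y))" by simp
  show ?thesis
    using sum_le_suminf[OF sums_summable[OF s], of "{..<N}"] sums_unique[OF s] assms
    by auto
qed

lemma ln2_lb: "ln (2::real) \<ge> 0.693147"
proof -
  have "(\<Sum>n<25. (1/2::real)^n / real n) \<le> - ln (1 - 1/2)" by (rule neg_ln_partial) auto
  moreover have "- ln (1 - 1/2::real) = ln 2" by (simp add: ln_div)
  moreover have "(\<Sum>n<25. (1/2::real)^n / real n) \<ge> 0.693147"
    by (simp add: numeral_eq_Suc)
  ultimately show ?thesis by linarith
qed

lemma ln2_lb': "ln (2::real) \<ge> 693147 / 1000000"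
  using ln2_lb by simp

lemma ln32_lb: "ln (3/2::real) \<ge> 0.405465"
proof -
  have "(\<Sum>n<16. (1/3::real)^n / real n) \<le> - ln (1 - 1/3)" by (rule neg_ln_partial) auto
  moreover have "- ln (1 - 1/3::real) = ln (3/2)" by (simp add: ln_div)
  moreover have "(\<Sum>n<16. (1/3::real)^n / real n) \<ge> 0.405465"
    by (simp add: numeral_eq_Suc)
  ultimately show ?thesis by linarith
qed

lemma ln54_lb: "ln (5/4::real) \<ge> 0.223143"
proof -
  have "(\<Sum>n<12. (1/5::real)^n / real n) \<le> - ln (1 - 1/5)" by (rule neg_ln_partial) auto
  moreover have "- ln (1 - 1/5::real) = ln (5/4)" by (simp add: ln_div)
  moreover have "(\<Sum>n<12. (1/5::real)^n / real n) \<ge> 0.223143"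
    by (simp add: numeral_eq_Suc)
  ultimately show ?thesis by linarith
qed

lemma ln76_lb: "ln (7/6::real) \<ge> 0.154150"
proof -
  have "(\<Sum>n<12. (1/7::real)^n / real n) \<le> - ln (1 - 1/7)" by (rule neg_ln_partial) auto
  moreover have "- ln (1 - 1/7::real) = ln (7/6)" by (simp add: ln_div)
  moreover have "(\<Sum>n<12. (1/7::real)^n / real n) \<ge> 0.154150"
    by (simp add: numeral_eq_Suc)
  ultimately show ?thesis by linarith
qed

lemma ln3_lb: "ln (3::real) \<ge> 1.098612"
proof -
  have "ln (3::real) = ln 2 + ln (3/2)" by (simp add: ln_div)
  thus ?thesis using ln2_lb ln32_lb by linarith
qed

lemma ln5_lb: "ln (5::real) \<ge> 1.609437"
proof -
  have "ln (5::real) = ln (2 * 2 * (5/4))" by simp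
  also have "\<dots> = ln 2 + ln 2 + ln (5/4)" by (simp only: ln_mult) simp_all
  finally have "ln (5::real) = ln 2 + ln 2 + ln (5/4)" .
  thus ?thesis using ln2_lb ln54_lb by linarith
qed

lemma ln7_lb: "ln (7::real) \<ge> 1.945909"
proof -
  have "ln (7::real) = ln (2 * 3 * (7/6))" by simp
  also have "\<dots> = ln 2 + ln 3 + ln (7/6)" by (simp only: ln_mult) simp_all
  finally have "ln (7::real) = ln 2 + ln 3 + ln (7/6)" .
  thus ?thesis using ln2_lb ln3_lb ln76_lb by linarith
qed

lemma exp_lb4:
  fixes s :: real assumes "s \<ge> 0"
  shows "exp s \<ge> (1 + s/4)^4"
proof -
  have "exp s = exp (s/4)^4" by (simp add: exp_of_nat_mult[symmetric])
  moreover have "exp (s/4) \<ge> 1 + s/4" by (rule exp_ge_add_one_self)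
  ultimately show ?thesis using assms by (simp add: power_mono)
qed

lemma w_lb:
  fixes p s :: real
  assumes "2 \<le> p" "1 \<le> s"
  shows "w_fun p (s * exp s) \<ge> 1 - (p + 2 * ((p - 1) / ln p)) / exp s"
proof -
  define E where "E = exp s"
  have E0: "E > 0" by (simp add: E_def)
  have lnX: "ln (s * E) = ln s + s" using assms by (simp add: E_def ln_mult)
  have lns: "ln s \<le> s" using assms by (intro less_imp_le ln_less_self) simp
  have lnX2: "ln (s * E) \<le> 2 * s" using lnX lns by linarith
  have lnX0: "ln (s * E) \<ge> 0" using lnX assms ln_ge_zero[of s] by linarith
  have q: "ln (s * E) / (s * E) \<le> 2 / E"
  proof -
    have "ln (s * E) / (s * E) \<le> (2 * s) / (s * E)"
      using lnX2 E0 assms by (intro divide_right_mono) auto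
    also have "\<dots> = 2 / E" using assms by simp
    finally show ?thesis .
  qed
  have c0: "(p - 1) / ln p \<ge> 0" using assms by simp
  have pX: "p / (s * E) \<le> p / E"
    using assms E0 by (intro divide_left_mono) (auto simp: mult_le_cancel_right1)
  have "(p - 1) / ln p * (ln (s * E) / (s * E)) \<le> (p - 1) / ln p * (2 / E)"
    using q c0 by (rule mult_left_mono)
  hence "w_fun p (s * E) \<ge> 1 - p / E - (p - 1) / ln p * (2 / E)"
    unfolding w_fun_def using pX by linarith
  moreover have "1 - p / E - (p - 1) / ln p * (2 / E) = 1 - (p + 2 * ((p - 1) / ln p)) / E"
    using E0 assms by (simp add: field_simps)
  ultimately show ?thesis by (simp add: E_def)
qed

lemma prod_mono3:
  fixes k a w A W :: real
  assumes "k \<ge> 0" "a \<ge> A" "A \<ge> 0" "w \<ge> W" "W \<ge> 0"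
  shows "k * a * w \<ge> k * A * W"
  using assms by (intro mult_mono) (auto intro: mult_left_mono)

lemma final_lin:
  fixes M k2 k3 k5 k7 q2 q3 q5 q7 :: real
  assumes "M \<ge> 20"
    "k2 \<ge> q2 - 1" "2 * q2 \<ge> M + 2 - 2"
    "k3 \<ge> q3 - 1" "3 * q3 \<ge> M + 2 - 3"
    "k5 \<ge> q5 - 1" "5 * q5 \<ge> M + 2 - 5"
    "k7 \<ge> q7 - 1" "7 * q7 \<ge> M + 2 - 7"
  shows "k2 * 0.69245 + k3 * 0.54875 + k5 * 0.40195 + k7 * 0.32399 \<ge> 0.5 * M"
proof -
  have "k2 * 0.69245 \<ge> (q2 - 1) * 0.69245" using assms by (intro mult_right_mono) auto
  moreover have "k3 * 0.54875 \<ge> (q3 - 1) * 0.54875" using assms by (intro mult_right_mono) auto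
  moreover have "k5 * 0.40195 \<ge> (q5 - 1) * 0.40195" using assms by (intro mult_right_mono) auto
  moreover have "k7 * 0.32399 \<ge> (q7 - 1) * 0.32399" using assms by (intro mult_right_mono) auto
  ultimately show ?thesis using assms by (simp add: algebra_simps)
qed

lemma final_arith:
  fixes m :: nat and k2 k3 k5 k7 :: real
  assumes "m \<ge> 13"
    "k2 \<ge> real ((m + 1) div 2) - 1" "2 * real ((m + 1) div 2) \<ge> real m + 2 - 2"
    "k3 \<ge> real ((m + 1) div 3) - 1" "3 * real ((m + 1) div 3) \<ge> real m + 2 - 3"
    "k5 \<ge> real ((m + 1) div 5) - 1" "5 * real ((m + 1) div 5) \<ge> real m + 2 - 5"
    "k7 \<ge> real ((m + 1) div 7) - 1" "7 * real ((m + 1) div 7) \<ge> real m + 2 - 7"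
  shows "k2 * 0.69245 + k3 * 0.54875 + k5 * 0.40195 + k7 * 0.32399 \<ge> 0.5 * real m"
proof (cases "m \<ge> 20")
  case True
  then have "real m \<ge> 20" by simp
  then show ?thesis using assms(2-) by (rule final_lin)
next
  case False
  then have "m = 13 \<or> m = 14 \<or> m = 15 \<or> m = 16 \<or> m = 17 \<or> m = 18 \<or> m = 19"
    using assms(1) by linarith
  then show ?thesis using assms by (elim disjE; simp; linarith)
qed

lemma prod_lb:
  fixes k a w A W c :: real
  assumes "k \<ge> 0" "a \<ge> A" "A \<ge> 0" "w \<ge> W" "W \<ge> 0" "A * W \<ge> c"
  shows "k * a * w \<ge> k * c"
proof -
  have "k * a * w \<ge> k * A * W" using prod_mono3 assms by blast
  moreover have "k * (A * W) \<ge> k * c" using assms by (intro mult_left_mono) auto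
  ultimately show ?thesis by (simp add: mult.assoc)
qed

lemma w_nonneg:
  fixes p s :: real
  assumes "2 \<le> p" "p \<le> s" "s \<ge> 1" "exp s \<ge> 5 * s"
  shows "w_fun p (s * exp s) \<ge> 0"
proof -
  have "ln 2 \<le> ln p" using assms by simp
  hence l2: "ln p \<ge> 1/2" using ln2_lb' by linarith
  have "(p - 1) / ln p \<le> (p - 1) / (1/2)"
    using l2 assms by (intro divide_left_mono) auto
  moreover have "(p - 1) / (1/2) = 2 * (p - 1)" by simp
  ultimately have c: "(p - 1) / ln p \<le> 2 * (p - 1)" by (rule ord_le_eq_trans)
  have gen: "p + 2 * c \<le> exp s" if "c \<le> 2 * (p - 1)" for c :: real using that assms by (smt (verit))
  have "p + 2 * ((p - 1) / ln p) \<le> exp s" by (rule gen[OF c])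
  hence "(p + 2 * ((p - 1) / ln p)) / exp s \<le> 1" by simp
  thus ?thesis using w_lb[of p s] assms by linarith
qed

lemma w_small:
  fixes p s :: real
  assumes "2 \<le> p" "p \<le> 7" "s \<ge> 1" "exp s \<ge> 38416"
  shows "w_fun p (s * exp s) \<ge> 999 / 1000"
proof -
  have "ln 2 \<le> ln p" using assms by simp
  hence l2: "ln p \<ge> 69/100" using ln2_lb' by linarith
  have "(p - 1) / ln p \<le> (p - 1) / (69/100)"
    using l2 assms by (intro divide_left_mono) auto
  moreover have "(p - 1) / (69/100) \<le> 9" using assms by simp
  ultimately have "p + 2 * ((p - 1) / ln p) \<le> exp s / 1000" using assms by linarith
  hence "(p + 2 * ((p - 1) / ln p)) / exp s \<le> 1 / 1000" by (simp add: divide_le_eq)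
  thus ?thesis using w_lb[of p s] assms by linarith
qed

theorem lemma6p5:
  fixes m :: nat
  assumes "m \<ge> 13"
  shows "kappa m \<ge> 0.5"
proof -
  define s where "s = s_fun m"
  define X where "X = s * exp s"
  define K where "K = (\<lambda>p::nat. Min {\<lfloor>real j / real p\<rfloor> + \<lfloor>real (m - j) / real p\<rfloor> | j. j \<le> m})"
  define T where "T = (\<lambda>p::nat. real_of_int (K p) * (ln (real p) / (real p - 1)) * w_fun (real p) X)"
  define S where "S = {p::nat. prime p \<and> real p \<le> (real m + 1) / 2}"
  have kap: "kappa m = (1 / real m) * sum T S"
    unfolding kappa_def T_def K_def S_def X_def s_def by simp
  have m13: "real m \<ge> 13" using assms by simp
  have "ln (8::real) = ln (2 * 2 * 2)" by simp
  also have "\<dots> = ln 2 + ln 2 + ln 2" by (simp only: ln_mult) simp_all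
  finally have "ln (8::real) \<ge> 2" using ln2_lb' by linarith
  moreover have "ln (8::real) \<le> ln (real m)" using m13 by simp
  ultimately have lnm: "ln (real m) \<ge> 2" by linarith
  have "(ln (real m))^2 \<ge> 2^2" using lnm by (intro power_mono) auto
  hence "s \<ge> real m * 4" unfolding s_def s_fun_def using m13 by (intro mult_left_mono) auto
  hence s4: "s \<ge> 4 * real m" by simp
  have s1: "s \<ge> 1" "s \<ge> 52" "s \<ge> real m" using s4 m13 by linarith+
  define t where "t = 1 + s / 4"
  have t14: "t \<ge> 14" using s1 by (simp add: t_def)
  have "t^3 \<ge> 14^3" using t14 by (intro power_mono) auto
  hence t3: "t^3 \<ge> 2744" by simp
  have "exp s \<ge> t^4" unfolding t_def using s1 by (intro exp_lb4) auto
  moreover have "t^4 = t * t^3" by (simp add: power_Suc[symmetric] del: power_Suc)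
  moreover have "t * t^3 \<ge> t * 2744" using t3 t14 by (intro mult_left_mono) auto
  ultimately have E: "exp s \<ge> t * 2744" by linarith
  have E1: "exp s \<ge> 38416" using E t14 by linarith
  have E2: "exp s \<ge> 5 * s" using E s1 by (simp add: t_def)
  have Tnn: "T p \<ge> 0" if "p \<in> S" for p
  proof -
    have p2: "p \<ge> 2" using that prime_ge_2_nat by (auto simp: S_def)
    have pm: "real p \<le> s" using that s1 m13 by (auto simp: S_def)
    have "K p \<ge> 0" unfolding K_def using min_bound(1)[of p m] p2 by simp
    moreover have "ln (real p) / (real p - 1) \<ge> 0" using p2 by simp
    moreover have "w_fun (real p) X \<ge> 0" unfolding X_def
      using w_nonneg[of "real p" s] p2 pm s1 E2 by simp
    ultimately show ?thesis unfolding T_def by (intro mult_nonneg_nonneg) auto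
  qed
  have finS: "finite S"
    by (rule finite_subset[of _ "{..m}"]) (auto simp: S_def)
  have sub: "{2,3,5,7} \<subseteq> S" using m13 by (auto simp: S_def)
  have "sum T {2,3,5,7} \<le> sum T S"
    using finS sub Tnn by (intro sum_mono2) auto
  moreover have "sum T {2,3,5,7} = T 2 + T 3 + T 5 + T 7" by simp
  moreover have "T 2 \<ge> real_of_int (K 2) * 0.69245"
    unfolding T_def
  proof (rule prod_lb)
    show "0 \<le> real_of_int (K 2)" unfolding K_def using min_bound(1)[of 2 m] by simp
    show "ln (real 2) / (real 2 - 1) \<ge> 0.693147" using ln2_lb by simp
    show "w_fun (real 2) X \<ge> 999 / 1000" unfolding X_def using w_small[of 2 s] s1 E1 by simp
  qed auto
  moreover have "T 3 \<ge> real_of_int (K 3) * 0.54875"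
    unfolding T_def
  proof (rule prod_lb)
    show "0 \<le> real_of_int (K 3)" unfolding K_def using min_bound(1)[of 3 m] by simp
    show "ln (real 3) / (real 3 - 1) \<ge> 0.549306" using ln3_lb by simp
    show "w_fun (real 3) X \<ge> 999 / 1000" unfolding X_def using w_small[of 3 s] s1 E1 by simp
  qed auto
  moreover have "T 5 \<ge> real_of_int (K 5) * 0.40195"
    unfolding T_def
  proof (rule prod_lb)
    show "0 \<le> real_of_int (K 5)" unfolding K_def using min_bound(1)[of 5 m] by simp
    show "ln (real 5) / (real 5 - 1) \<ge> 0.40235925" using ln5_lb by simp
    show "w_fun (real 5) X \<ge> 999 / 1000" unfolding X_def using w_small[of 5 s] s1 E1 by simp
  qed auto
  moreover have "T 7 \<ge> real_of_int (K 7) * 0.32399"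
    unfolding T_def
  proof (rule prod_lb)
    show "0 \<le> real_of_int (K 7)" unfolding K_def using min_bound(1)[of 7 m] by simp
    show "ln (real 7) / (real 7 - 1) \<ge> 0.3243181" using ln7_lb by simp
    show "w_fun (real 7) X \<ge> 999 / 1000" unfolding X_def using w_small[of 7 s] s1 E1 by simp
  qed auto
  moreover have "real_of_int (K 2) * 0.69245 + real_of_int (K 3) * 0.54875
      + real_of_int (K 5) * 0.40195 + real_of_int (K 7) * 0.32399 \<ge> 0.5 * real m"
    apply (rule final_arith[OF assms])
    using min_bound(2)[of 2 m] min_bound(2)[of 3 m] min_bound(2)[of 5 m] min_bound(2)[of 7 m]
      div_bound[of 2 m] div_bound[of 3 m] div_bound[of 5 m] div_bound[of 7 m]
    by (simp_all add: K_def)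
  ultimately have "sum T S \<ge> 0.5 * real m" by linarith
  hence "(1 / real m) * sum T S \<ge> (1 / real m) * (0.5 * real m)"
    by (intro mult_left_mono) auto
  thus ?thesis using kap m13 by simp
qed

end
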